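(* Let $\Phi=(V,Q,\mathcal{C})$ be a CSP formula with atomic constraints and $h$ a projection scheme satisfying the entropy criterion with parameters $0<\beta<\alpha<1$. Let $q_v=|Q_v|$, $p=\max_{c\in\mathcal{C}}\prod_{v\in\mathrm{vbl}(c)}\frac1{q_v}$, and let $D$ be the maximum degree of the dependency graph of $\Phi$. If $\log\frac1p\ge\frac1\beta\log(2\mathrm{e}D)$, then the Glauber dynamics on $\nu$ is irreducible, aperiodic and reversible with respect to $\nu$, and hence has the unique stationary distribution $\nu$.
   Context: A CSP formula: variables $V$ with finite domains $Q_v$ ($|Q_v|\ge2$), constraints $c$ on $\mathrm{vbl}(c)\subseteq V$; atomic means violated by exactly one configuration of its variables. Dependency graph: vertices $\mathcal{C}$, adjacency iff variable sets intersect. $\mu$: uniform distribution over satisfying assignments. Projection scheme: $h_v:Q_v\to\Sigma_v$, $s_v=|\Sigma_v|$, $\Sigma=\bigotimes_v\Sigma_v$. Entropy criterion with $(\alpha,\beta)$: $\lfloor q_v/s_v\rfloor\le|h_v^{-1}(y)|\le\lceil q_v/s_v\rceil$ for all $v,y$; and for each $c$: $\sum_{v\in\mathrm{vbl}(c)}\log\lceil q_v/s_v\rceil\le\alpha\sum_{v\in\mathrm{vbl}(c)}\log q_v$, $\sum_{v\in\mathrm{vbl}(c)}\log\lfloor q_v/s_v\rfloor\ge\beta\sum_{v\in\mathrm{vbl}(c)}\log q_v$. $\nu$ is the distribution of $(h_v(X_v))_v$ for $X\sim\mu$. Glauber dynamics on $\nu$: pick $v\in V$ uniformly and resample $Y_v$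 from the marginal of $\nu$ at $v$ conditioned on $Y_{V\setminus\{v\}}$. $\log$ base 2. *)

theory Defs
  imports "HOL-Library.FuncSet"  Complex_Main
begin

text \<open>A CSP formula: variables V (of type 'v), finite domains Q v (values of type 'a),
 constraints indexed by the set C (of type 'c); constraint c has scope vbl c and
 is satisfied by a configuration sigma of its variables iff sat c sigma.\<close>

definition csp_formula ::
  "'v set \<Rightarrow> ('v \<Rightarrow> 'a set) \<Rightarrow> 'c set \<Rightarrow> ('c \<Rightarrow> 'v set) \<Rightarrow> bool" where
  "csp_formula V Q C vbl \<longleftrightarrow>
     finite V \<and> V \<noteq> {} \<and> finite C \<and>
     (\<forall>v\<in>V. finite (Q v) \<and> card (Q v) \<ge> 2) \<and>
     (\<forall>c\<in>C. vbl c \<subseteq> V \<and> vbl c \<noteq> {})"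

definition atomic_constraints ::
  "('v \<Rightarrow> 'a set) \<Rightarrow> 'c set \<Rightarrow> ('c \<Rightarrow> 'v set) \<Rightarrow> ('c \<Rightarrow> ('v \<Rightarrow> 'a) \<Rightarrow> bool) \<Rightarrow> bool" where
  "atomic_constraints Q C vbl sat \<longleftrightarrow>
     (\<forall>c\<in>C. card {\<sigma> \<in> PiE (vbl c) Q. \<not> sat c \<sigma>} = 1)"

definition sat_assignments ::
  "'v set \<Rightarrow> ('v \<Rightarrow> 'a set) \<Rightarrow> 'c set \<Rightarrow> ('c \<Rightarrow> 'v set) \<Rightarrow> ('c \<Rightarrow> ('v \<Rightarrow> 'a) \<Rightarrow> bool)
     \<Rightarrow> ('v \<Rightarrow> 'a) set" where
  "sat_assignments V Q C vbl sat = {x \<in> PiE V Q. \<forall>c\<in>C. sat c (restrict x (vbl c))}"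

definition dep_degree :: "'c set \<Rightarrow> ('c \<Rightarrow> 'v set) \<Rightarrow> 'c \<Rightarrow> nat" where
  "dep_degree C vbl c = card {c' \<in> C. c' \<noteq> c \<and> vbl c \<inter> vbl c' \<noteq> {}}"

definition max_dep_degree :: "'c set \<Rightarrow> ('c \<Rightarrow> 'v set) \<Rightarrow> nat" where
  "max_dep_degree C vbl = Max (insert 0 (dep_degree C vbl ` C))"

text \<open>p = max over constraints of prod_{v in vbl c} 1/q_v (0 if there are no constraints).\<close>
definition max_viol_prob :: "('v \<Rightarrow> 'a set) \<Rightarrow> 'c set \<Rightarrow> ('c \<Rightarrow> 'v set) \<Rightarrow> real" where
  "max_viol_prob Q C vbl = Max (insert 0 ((\<lambda>c. \<Prod>v\<in>vbl c. 1 / real (card (Q v))) ` C))"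

definition projection_scheme ::
  "'v set \<Rightarrow> ('v \<Rightarrow> 'a set) \<Rightarrow> ('v \<Rightarrow> 'a \<Rightarrow> 'b) \<Rightarrow> ('v \<Rightarrow> 'b set) \<Rightarrow> bool" where
  "projection_scheme V Q h Sig \<longleftrightarrow> (\<forall>v\<in>V. finite (Sig v) \<and> h v \<in> Q v \<rightarrow> Sig v)"

text \<open>Entropy criterion with parameters (alpha, beta), written with log base 2.
  Note: log 0 is -infinity in the paper; we state the two log-inequalities in
  their exponentiated (product) form, which is exactly equivalent under that
  convention and avoids Isabelle's junk value log 0 = 0.\<close>
definition entropy_criterion ::
  "'v set \<Rightarrow> ('v \<Rightarrow> 'a set) \<Rightarrow> 'c set \<Rightarrow> ('c \<Rightarrow> 'v set) \<Rightarrow> ('v \<Rightarrow> 'a \<Rightarrow> 'b) \<Rightarrow> ('v \<Rightarrow> 'b set)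
     \<Rightarrow> real \<Rightarrow> real \<Rightarrow> bool" where
  "entropy_criterion V Q C vbl h Sig \<alpha> \<beta> \<longleftrightarrow>
     (\<forall>v\<in>V. \<forall>y\<in>Sig v.
        real_of_int \<lfloor>real (card (Q v)) / real (card (Sig v))\<rfloor> \<le> real (card {a \<in> Q v. h v a = y}) \<and>
        real (card {a \<in> Q v. h v a = y}) \<le> real_of_int \<lceil>real (card (Q v)) / real (card (Sig v))\<rceil>) \<and>
     (\<forall>c\<in>C.
        (\<Prod>v\<in>vbl c. real_of_int \<lceil>real (card (Q v)) / real (card (Sig v))\<rceil>)
           \<le> (\<Prod>v\<in>vbl c. real (card (Q v))) powr \<alpha> \<and>
        (\<Prod>v\<in>vbl c. real_of_int \<lfloor>real (card (Q v)) / real (card (Sig v))\<rfloor>)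
           \<ge> (\<Prod>v\<in>vbl c. real (card (Q v))) powr \<beta>)"

definition proj :: "'v set \<Rightarrow> ('v \<Rightarrow> 'a \<Rightarrow> 'b) \<Rightarrow> ('v \<Rightarrow> 'a) \<Rightarrow> ('v \<Rightarrow> 'b)" where
  "proj V h x = (\<lambda>v. if v \<in> V then h v (x v) else undefined)"

text \<open>nu: law of the projection of X ~ mu (mu uniform on satisfying assignments).\<close>
definition proj_dist ::
  "'v set \<Rightarrow> ('v \<Rightarrow> 'a set) \<Rightarrow> 'c set \<Rightarrow> ('c \<Rightarrow> 'v set) \<Rightarrow> ('c \<Rightarrow> ('v \<Rightarrow> 'a) \<Rightarrow> bool)
     \<Rightarrow> ('v \<Rightarrow> 'a \<Rightarrow> 'b) \<Rightarrow> ('v \<Rightarrow> 'b) \<Rightarrow> real" where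
  "proj_dist V Q C vbl sat h y =
     real (card {x \<in> sat_assignments V Q C vbl sat. proj V h x = y})
     / real (card (sat_assignments V Q C vbl sat))"

text \<open>State space of the Glauber dynamics on nu: the support of nu.\<close>
definition proj_support ::
  "'v set \<Rightarrow> ('v \<Rightarrow> 'a set) \<Rightarrow> 'c set \<Rightarrow> ('c \<Rightarrow> 'v set) \<Rightarrow> ('c \<Rightarrow> ('v \<Rightarrow> 'a) \<Rightarrow> bool)
     \<Rightarrow> ('v \<Rightarrow> 'a \<Rightarrow> 'b) \<Rightarrow> ('v \<Rightarrow> 'b) set" where
  "proj_support V Q C vbl sat h = proj V h ` sat_assignments V Q C vbl sat"

text \<open>Glauber dynamics for a distribution pi with (finite) support S on configurations
  over V: pick v in V uniformly, resample y_v from pi conditioned on y off v.\<close>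
definition glauber :: "'v set \<Rightarrow> ('v \<Rightarrow> 'b) set \<Rightarrow> (('v \<Rightarrow> 'b) \<Rightarrow> real)
     \<Rightarrow> ('v \<Rightarrow> 'b) \<Rightarrow> ('v \<Rightarrow> 'b) \<Rightarrow> real" where
  "glauber V S \<pi> y y' =
     (1 / real (card V)) *
     (\<Sum>v\<in>V. if y' \<in> S \<and> (\<forall>u. u \<noteq> v \<longrightarrow> y' u = y u)
              then \<pi> y' / (\<Sum>z\<in>{z \<in> S. \<forall>u. u \<noteq> v \<longrightarrow> z u = y u}. \<pi> z)
              else 0)"

definition prob_dist_on :: "'s set \<Rightarrow> ('s \<Rightarrow> real) \<Rightarrow> bool" where
  "prob_dist_on S \<pi> \<longleftrightarrow> (\<forall>x\<in>S. \<pi> x \<ge> 0) \<and> (\<Sum>x\<in>S. \<pi> x) = 1"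

definition stochastic_on :: "'s set \<Rightarrow> ('s \<Rightarrow> 's \<Rightarrow> real) \<Rightarrow> bool" where
  "stochastic_on S P \<longleftrightarrow> finite S \<and> (\<forall>x\<in>S. prob_dist_on S (P x))"

fun mpow :: "'s set \<Rightarrow> ('s \<Rightarrow> 's \<Rightarrow> real) \<Rightarrow> nat \<Rightarrow> 's \<Rightarrow> 's \<Rightarrow> real" where
  "mpow S P 0 x y = (if x = y then 1 else 0)"
| "mpow S P (Suc n) x y = (\<Sum>z\<in>S. P x z * mpow S P n z y)"

definition irreducible_on :: "'s set \<Rightarrow> ('s \<Rightarrow> 's \<Rightarrow> real) \<Rightarrow> bool" where
  "irreducible_on S P \<longleftrightarrow> (\<forall>x\<in>S. \<forall>y\<in>S. \<exists>n. mpow S P n x y > 0)"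

definition aperiodic_on :: "'s set \<Rightarrow> ('s \<Rightarrow> 's \<Rightarrow> real) \<Rightarrow> bool" where
  "aperiodic_on S P \<longleftrightarrow> (\<forall>x\<in>S. Gcd {n. n > 0 \<and> mpow S P n x x > 0} = 1)"

definition reversible_on :: "'s set \<Rightarrow> ('s \<Rightarrow> 's \<Rightarrow> real) \<Rightarrow> ('s \<Rightarrow> real) \<Rightarrow> bool" where
  "reversible_on S P \<pi> \<longleftrightarrow> (\<forall>x\<in>S. \<forall>y\<in>S. \<pi> x * P x y = \<pi> y * P y x)"

definition stationary_on :: "'s set \<Rightarrow> ('s \<Rightarrow> 's \<Rightarrow> real) \<Rightarrow> ('s \<Rightarrow> real) \<Rightarrow> bool" where
  "stationary_on S P \<pi> \<longleftrightarrow> prob_dist_on S \<pi> \<and> (\<forall>y\<in>S. (\<Sum>x\<in>S. \<pi> x * P x y) = \<pi> y)"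

definition unique_stationary_on :: "'s set \<Rightarrow> ('s \<Rightarrow> 's \<Rightarrow> real) \<Rightarrow> ('s \<Rightarrow> real) \<Rightarrow> bool" where
  "unique_stationary_on S P \<pi> \<longleftrightarrow>
     stationary_on S P \<pi> \<and> (\<forall>\<pi>'. stationary_on S P \<pi>' \<longrightarrow> (\<forall>x\<in>S. \<pi>' x = \<pi> x))"

end

theory Submission
  imports Defs
begin


locale lll =
  fixes V :: "'v set" and G :: "'v \<Rightarrow> 'a set" and C :: "'c set"
    and vbl :: "'c \<Rightarrow> 'v set" and \<sigma> :: "'c \<Rightarrow> 'v \<Rightarrow> 'a" and x r :: real and D :: nat
  assumes finV: "finite V" and finG: "\<forall>v\<in>V. finite (G v) \<and> G v \<noteq> {}"
    and finC: "finite C" and vblV: "\<forall>c\<in>C. vbl c \<subseteq> V"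
    and rbound: "\<forall>c\<in>C. 1 \<le> r * (\<Prod>v\<in>vbl c. real (card (G v)))"
    and deg: "\<forall>c\<in>C. card {c'\<in>C. c' \<noteq> c \<and> vbl c \<inter> vbl c' \<noteq> {}} \<le> D"
    and x0: "0 < x" and x1: "x < 1" and rx: "r \<le> x * (1-x)^D"
begin

definition "F = PiE V G"
definition "good T y \<longleftrightarrow> (\<forall>c\<in>T. restrict y (vbl c) \<noteq> \<sigma> c)"
definition "N T = card {y\<in>F. good T y}"

lemma finF: "finite F"
  unfolding F_def using finV finG by (auto intro: finite_PiE)

lemma indep:
  assumes c: "c \<in> C" and T: "T \<subseteq> C" and disj: "\<forall>c'\<in>T. vbl c \<inter> vbl c' = {}"
  shows "real (card {y\<in>F. restrict y (vbl c) = \<sigma> c \<and> good T y}) \<le> r * real (N T)"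
proof -
  define A where "A = vbl c"
  define B where "B = {y\<in>F. restrict y A = \<sigma> c \<and> good T y}"
  define Gd where "Gd = {y\<in>F. good T y}"
  define m where "m = (\<lambda>(y::'v\<Rightarrow>'a, a::'v\<Rightarrow>'a). (\<lambda>v. if v \<in> A then a v else y v))"
  have AV: "A \<subseteq> V" using vblV c A_def by auto
  have finA: "finite A" using AV finV finite_subset by blast
  have inj: "inj_on m (B \<times> PiE A G)"
  proof (rule inj_onI)
    fix p1 p2 assume h1: "p1 \<in> B \<times> PiE A G" and h2: "p2 \<in> B \<times> PiE A G"
      and e0: "m p1 = m p2"
    obtain y1 a1 where p1: "p1 = (y1, a1)" by (cases p1)
    obtain y2 a2 where p2: "p2 = (y2, a2)" by (cases p2)
    have h: "(y1, a1) \<in> B \<times> PiE A G" "(y2, a2) \<in> B \<times> PiE A G" using h1 h2 p1 p2 by auto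
    have e: "m (y1, a1) = m (y2, a2)" using e0 p1 p2 by simp
    have e1: "restrict y1 A = \<sigma> c" using h(1) unfolding B_def by auto
    have e2: "restrict y2 A = \<sigma> c" using h(2) unfolding B_def by auto
    have r1: "y1 v = \<sigma> c v" if "v \<in> A" for v using fun_cong[OF e1, of v] that by simp
    have r2: "y2 v = \<sigma> c v" if "v \<in> A" for v using fun_cong[OF e2, of v] that by simp
    have e': "\<And>v. (if v \<in> A then a1 v else y1 v) = (if v \<in> A then a2 v else y2 v)"
      using e unfolding m_def by (simp add: fun_eq_iff)
    have "y1 = y2"
    proof
      fix v show "y1 v = y2 v"
      proof (cases "v \<in> A")
        case True thus ?thesis using r1 r2 by simp
      next
        case False thus ?thesis using e'[of v] by simp
      qed
    qed
    moreover have "a1 = a2"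
    proof
      fix v
      have aa: "a1 \<in> PiE A G" "a2 \<in> PiE A G" using h by auto
      show "a1 v = a2 v"
      proof (cases "v \<in> A")
        case True thus ?thesis using e'[of v] by simp
      next
        case False thus ?thesis using PiE_arb[OF aa(1) False] PiE_arb[OF aa(2) False] by simp
      qed
    qed
    ultimately show "p1 = p2" using p1 p2 by simp
  qed
  have img: "m ` (B \<times> PiE A G) \<subseteq> Gd"
  proof (rule subsetI)
    fix z assume "z \<in> m ` (B \<times> PiE A G)"
    then obtain y a where h: "(y, a) \<in> B \<times> PiE A G" and z: "z = m (y, a)" by auto
    hence yF: "y \<in> PiE V G" and gy: "good T y" and aA: "a \<in> PiE A G" unfolding B_def F_def by auto
    have "(\<lambda>v. if v \<in> A then a v else y v) \<in> PiE V G"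
    proof (rule PiE_I)
      fix v assume v: "v \<in> V"
      show "(if v \<in> A then a v else y v) \<in> G v"
      proof (cases "v \<in> A")
        case True thus ?thesis using PiE_mem[OF aA True] by simp
      next
        case False thus ?thesis using PiE_mem[OF yF v] by simp
      qed
    next
      fix v assume v: "v \<notin> V"
      hence "v \<notin> A" using AV by blast
      thus "(if v \<in> A then a v else y v) = undefined" using PiE_arb[OF yF v] by simp
    qed
    hence "m (y, a) \<in> PiE V G" unfolding m_def by simp
    moreover have "good T (m (y, a))"
      unfolding good_def
    proof
      fix c' assume c': "c' \<in> T"
      have nA: "v \<notin> A" if "v \<in> vbl c'" for v using disj c' that unfolding A_def by blast
      have "restrict (m (y, a)) (vbl c') = restrict y (vbl c')"
      proof (rule ext)
        fix v show "restrict (m (y, a)) (vbl c') v = restrict y (vbl c') v"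
          by (cases "v \<in> vbl c'") (simp_all add: m_def nA)
      qed
      thus "restrict (m (y, a)) (vbl c') \<noteq> \<sigma> c'" using gy c' unfolding good_def by simp
    qed
    ultimately show "z \<in> Gd" unfolding Gd_def F_def z by simp
  qed
  have finGd: "finite Gd" unfolding Gd_def using finF by simp
  have "card (B \<times> PiE A G) \<le> card Gd"
    using card_inj_on_le[OF inj img finGd] .
  hence le: "card B * (\<Prod>v\<in>A. card (G v)) \<le> card Gd"
    by (simp add: card_cartesian_product card_PiE[OF finA])
  have pos: "1 \<le> r * (\<Prod>v\<in>A. real (card (G v)))" using rbound c A_def by auto
  have "0 \<le> (\<Prod>v\<in>A. real (card (G v)))" by (simp add: prod_nonneg)
  hence r0: "0 < r"
  proof -
    assume p0: "0 \<le> (\<Prod>v\<in>A. real (card (G v)))"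
    show "0 < r"
    proof (rule ccontr)
      assume "\<not> 0 < r"
      hence "r * (\<Prod>v\<in>A. real (card (G v))) \<le> 0" using p0 by (simp add: mult_nonpos_nonneg)
      thus False using pos by simp
    qed
  qed
  have "real (card B) \<le> real (card B) * (r * (\<Prod>v\<in>A. real (card (G v))))"
    using pos by (simp add: mult_le_cancel_left1)
  also have "\<dots> = r * real (card B * (\<Prod>v\<in>A. card (G v)))" by simp
  also have "\<dots> \<le> r * real (card Gd)"
  proof (rule mult_left_mono)
    show "real (card B * (\<Prod>v\<in>A. card (G v))) \<le> real (card Gd)" using le by (simp only: of_nat_le_iff)
  qed (use r0 in simp)
  finally show ?thesis unfolding N_def Gd_def B_def A_def .
qed

lemma step:
  assumes "real (card {y\<in>F. restrict y (vbl c) = \<sigma> c \<and> good S y}) \<le> x * real (N S)"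
  shows "(1 - x) * real (N S) \<le> real (N (insert c S))"
proof -
  have eq: "{y\<in>F. good (insert c S) y} = {y\<in>F. good S y} - {y\<in>F. restrict y (vbl c) = \<sigma> c \<and> good S y}"
    unfolding good_def by auto
  have "card {y\<in>F. good (insert c S) y} = card {y\<in>F. good S y} - card {y\<in>F. restrict y (vbl c) = \<sigma> c \<and> good S y}"
    unfolding eq by (rule card_Diff_subset) (use finF in auto)
  moreover have "card {y\<in>F. restrict y (vbl c) = \<sigma> c \<and> good S y} \<le> card {y\<in>F. good S y}"
    by (rule card_mono) (use finF in auto)
  ultimately have "real (N (insert c S)) = real (N S) - real (card {y\<in>F. restrict y (vbl c) = \<sigma> c \<and> good S y})"
    unfolding N_def by simp
  thus ?thesis using assms by (simp add: algebra_simps)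
qed

lemma grow:
  assumes H: "\<And>S c. S \<subseteq> T \<Longrightarrow> c \<in> T \<Longrightarrow> c \<notin> S \<Longrightarrow>
      real (card {y\<in>F. restrict y (vbl c) = \<sigma> c \<and> good S y}) \<le> x * real (N S)"
  shows "finite U \<Longrightarrow> T' \<inter> U = {} \<Longrightarrow> T' \<union> U \<subseteq> T \<Longrightarrow> (1-x)^card U * real (N T') \<le> real (N (T' \<union> U))"
proof (induction U rule: finite_induct)
  case empty then show ?case by simp
next
  case (insert u U)
  have IH: "(1-x)^card U * real (N T') \<le> real (N (T' \<union> U))" using insert by auto
  have "(1 - x) * real (N (T' \<union> U)) \<le> real (N (insert u (T' \<union> U)))"
    by (rule step, rule H) (use insert in auto)
  moreover have "(1-x) * ((1-x)^card U * real (N T')) \<le> (1-x) * real (N (T' \<union> U))"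
    by (rule mult_left_mono[OF IH]) (use x1 in simp)
  ultimately have "(1-x) * ((1-x)^card U * real (N T')) \<le> real (N (insert u (T' \<union> U)))"
    by linarith
  thus ?case using insert by (simp add: mult.assoc)
qed

lemma claim:
  "finite T \<Longrightarrow> T \<subseteq> C \<Longrightarrow> \<forall>c\<in>C. c \<notin> T \<longrightarrow>
     real (card {y\<in>F. restrict y (vbl c) = \<sigma> c \<and> good T y}) \<le> x * real (N T)"
proof (induction T rule: finite_psubset_induct)
  case (psubset T)
  show ?case
  proof (intro ballI impI)
    fix c assume c: "c \<in> C" "c \<notin> T"
    define T1 where "T1 = {c'\<in>T. vbl c \<inter> vbl c' \<noteq> {}}"
    define T2 where "T2 = T - T1"
    have H: "\<And>S c'. S \<subseteq> T \<Longrightarrow> c' \<in> T \<Longrightarrow> c' \<notin> S \<Longrightarrow>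
      real (card {y\<in>F. restrict y (vbl c') = \<sigma> c' \<and> good S y}) \<le> x * real (N S)"
    proof -
      fix S c' assume "S \<subseteq> T" "c' \<in> T" "c' \<notin> S"
      hence sT: "S \<subset> T" by auto
      have SC: "S \<subseteq> C" "c' \<in> C" using \<open>S \<subseteq> T\<close> \<open>c' \<in> T\<close> psubset.prems by auto
      have "\<forall>c\<in>C. c \<notin> S \<longrightarrow> real (card {y\<in>F. restrict y (vbl c) = \<sigma> c \<and> good S y}) \<le> x * real (N S)"
        using psubset.IH[OF sT SC(1)] .
      thus "real (card {y\<in>F. restrict y (vbl c') = \<sigma> c' \<and> good S y}) \<le> x * real (N S)"
        using SC(2) \<open>c' \<notin> S\<close> by blast
    qed
    have finT1: "finite T1" using psubset.hyps T1_def by simp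
    have cT1: "card T1 \<le> D"
    proof -
      have "T1 \<subseteq> {c'\<in>C. c' \<noteq> c \<and> vbl c \<inter> vbl c' \<noteq> {}}" using T1_def c psubset.prems by auto
      hence "card T1 \<le> card {c'\<in>C. c' \<noteq> c \<and> vbl c \<inter> vbl c' \<noteq> {}}"
        by (rule card_mono[rotated]) (use finC in simp)
      thus ?thesis using deg c by (meson order_trans)
    qed
    have cm: "card {y\<in>F. restrict y (vbl c) = \<sigma> c \<and> good T y} \<le> card {y\<in>F. restrict y (vbl c) = \<sigma> c \<and> good T2 y}"
      by (rule card_mono) (use finF in \<open>auto simp: T2_def good_def\<close>)
    have T2C: "T2 \<subseteq> C" using psubset.prems unfolding T2_def by auto
    have disj: "\<forall>c'\<in>T2. vbl c \<inter> vbl c' = {}" unfolding T2_def T1_def by auto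
    have pd: "(1-x)^D \<le> (1-x)^card T1" by (rule power_decreasing) (use cT1 x0 x1 in auto)
    have d1: "T2 \<inter> T1 = {}" and d2: "T2 \<union> T1 \<subseteq> T" unfolding T1_def T2_def by auto
    have g: "(1-x)^card T1 * real (N T2) \<le> real (N (T2 \<union> T1))" by (rule grow[OF H finT1 d1 d2])
    have "real (card {y\<in>F. restrict y (vbl c) = \<sigma> c \<and> good T y}) \<le> real (card {y\<in>F. restrict y (vbl c) = \<sigma> c \<and> good T2 y})"
      using cm by simp
    also have "\<dots> \<le> r * real (N T2)" by (rule indep[OF c(1) T2C disj])
    also have "\<dots> \<le> x * (1-x)^D * real (N T2)" by (rule mult_right_mono[OF rx]) simp
    also have "\<dots> \<le> x * (1-x)^card T1 * real (N T2)"
      by (intro mult_right_mono mult_left_mono pd) (use x0 in auto)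
    also have "\<dots> = x * ((1-x)^card T1 * real (N T2))" by (simp add: mult.assoc)
    also have "\<dots> \<le> x * real (N (T2 \<union> T1))" by (rule mult_left_mono[OF g]) (use x0 in simp)
    also have "T2 \<union> T1 = T" using T1_def T2_def by auto
    finally show "real (card {y\<in>F. restrict y (vbl c) = \<sigma> c \<and> good T y}) \<le> x * real (N T)" .
  qed
qed

lemma exists_good: "\<exists>y\<in>PiE V G. \<forall>c\<in>C. restrict y (vbl c) \<noteq> \<sigma> c"
proof -
  have H: "\<And>S c. S \<subseteq> C \<Longrightarrow> c \<in> C \<Longrightarrow> c \<notin> S \<Longrightarrow>
      real (card {y\<in>F. restrict y (vbl c) = \<sigma> c \<and> good S y}) \<le> x * real (N S)"
  proof -
    fix S c assume a: "S \<subseteq> C" "c \<in> C" "c \<notin> S"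
    have "finite S" using finC a(1) by (rule finite_subset[rotated])
    from claim[OF this a(1)] a(2,3)
    show "real (card {y\<in>F. restrict y (vbl c) = \<sigma> c \<and> good S y}) \<le> x * real (N S)" by simp
  qed
  have "(1-x)^card C * real (N {}) \<le> real (N ({} \<union> C))"
    by (rule grow[OF H finC]) auto
  moreover have "F \<noteq> {}" unfolding F_def using finG by (simp add: PiE_eq_empty_iff)
  hence "N {} > 0" unfolding N_def good_def using finF by (simp add: card_gt_0_iff)
  moreover have "0 < (1-x)^card C * real (N {})" using x1 \<open>N {} > 0\<close> by simp
  ultimately have "real (N C) > 0" by simp
  hence "N C > 0" by simp
  have "{y\<in>F. good C y} \<noteq> {}"
  proof
    assume e: "{y\<in>F. good C y} = {}"
    have "N C = 0" unfolding N_def e by simp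
    thus False using \<open>N C > 0\<close> by simp
  qed
  thus ?thesis unfolding F_def good_def by auto
qed

end



lemma mpow_nonneg:
  assumes "\<And>x z. z \<in> S \<Longrightarrow> P x z \<ge> 0"
  shows "mpow S P n x y \<ge> 0"
  by (induction n arbitrary: x) (auto intro!: sum_nonneg mult_nonneg_nonneg simp: assms)

lemma mpow_step:
  assumes "\<And>x z. z \<in> S \<Longrightarrow> P x z \<ge> 0" and "finite S" and "z \<in> S"
  shows "P x z * mpow S P n z y \<le> mpow S P (Suc n) x y"
proof -
  have "P x z * mpow S P n z y \<le> (\<Sum>w\<in>S. P x w * mpow S P n w y)"
    by (rule member_le_sum) (use assms mpow_nonneg[OF assms(1)] in \<open>auto intro!: mult_nonneg_nonneg\<close>)
  thus ?thesis by simp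
qed

lemma harmonic_const:
  assumes fin: "finite S" and nn: "\<And>x z. z \<in> S \<Longrightarrow> P x z \<ge> 0"
    and rows: "\<And>y. y \<in> S \<Longrightarrow> (\<Sum>x\<in>S. P y x) = 1"
    and harm: "\<And>y. y \<in> S \<Longrightarrow> (\<Sum>x\<in>S. P y x * f x) = f y"
    and irr: "irreducible_on S P"
    and y0: "y0 \<in> S" and mx: "\<And>z. z \<in> S \<Longrightarrow> f z \<le> f y0"
  shows "\<And>z. z \<in> S \<Longrightarrow> f z = f y0"
proof -
  define M where "M = f y0"
  have one: "f z = M" if y: "y \<in> S" "f y = M" and z: "z \<in> S" "P y z > 0" for y z
  proof -
    have "(\<Sum>x\<in>S. P y x * (M - f x)) = M * (\<Sum>x\<in>S. P y x) - (\<Sum>x\<in>S. P y x * f x)"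
      by (simp add: algebra_simps sum_subtractf sum_distrib_left)
    also have "\<dots> = 0" using rows[OF y(1)] harm[OF y(1)] y(2) by simp
    finally have s0: "(\<Sum>x\<in>S. P y x * (M - f x)) = 0" .
    have "\<forall>x\<in>S. P y x * (M - f x) = 0"
      using s0 sum_nonneg_eq_0_iff[OF fin, of "\<lambda>x. P y x * (M - f x)"] nn mx M_def
      by (auto intro!: mult_nonneg_nonneg)
    hence "P y z * (M - f z) = 0" using z by auto
    thus ?thesis using z(2) by simp
  qed
  have ind: "\<And>x. x \<in> S \<Longrightarrow> f x = M \<Longrightarrow> mpow S P n x w > 0 \<Longrightarrow> w \<in> S \<Longrightarrow> f w = M" for n w
  proof (induction n)
    case 0 thus ?case by (auto split: if_splits)
  next
    case (Suc n)
    have "0 < (\<Sum>z\<in>S. P x z * mpow S P n z w)" using Suc.prems(3) by simp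
    then obtain z where z: "z \<in> S" "P x z * mpow S P n z w > 0"
      by (metis (no_types, lifting) not_le sum_nonpos)
    have "P x z \<ge> 0" "mpow S P n z w \<ge> 0" using nn z(1) mpow_nonneg[OF nn] by auto
    hence "P x z > 0" "mpow S P n z w > 0" using z(2)
      by (metis less_eq_real_def mult_zero_left) (metis \<open>P x z \<ge> 0\<close> \<open>mpow S P n z w \<ge> 0\<close> less_eq_real_def mult_zero_right z(2) order_less_irrefl)
    hence "f z = M" using one Suc.prems z(1) by blast
    thus ?case using Suc.IH z(1) \<open>mpow S P n z w > 0\<close> Suc.prems(4) by blast
  qed
  fix z assume z: "z \<in> S"
  obtain n where "mpow S P n y0 z > 0" using irr y0 z unfolding irreducible_on_def by blast
  thus "f z = f y0" using ind[OF y0 _ _ z] M_def by simp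
qed

lemma markov_unique:
  assumes fin: "finite S" and nn: "\<And>x z. z \<in> S \<Longrightarrow> P x z \<ge> 0"
    and rows: "\<And>y. y \<in> S \<Longrightarrow> (\<Sum>x\<in>S. P y x) = 1"
    and pos: "\<And>y. y \<in> S \<Longrightarrow> \<pi> y > 0"
    and pd: "prob_dist_on S \<pi>"
    and rev: "reversible_on S P \<pi>"
    and irr: "irreducible_on S P"
  shows "unique_stationary_on S P \<pi>"
proof -
  have stat: "stationary_on S P \<pi>" for \<pi>' :: "'a \<Rightarrow> real"
    unfolding stationary_on_def
  proof (intro conjI pd ballI)
    fix y assume y: "y \<in> S"
    have "(\<Sum>x\<in>S. \<pi> x * P x y) = (\<Sum>x\<in>S. \<pi> y * P y x)"
      using rev y unfolding reversible_on_def by (intro sum.cong) auto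
    also have "\<dots> = \<pi> y" using rows[OF y] by (simp add: sum_distrib_left[symmetric])
    finally show "(\<Sum>x\<in>S. \<pi> x * P x y) = \<pi> y" .
  qed
  have "\<forall>x\<in>S. \<pi>' x = \<pi> x" if st: "stationary_on S P \<pi>'" for \<pi>'
  proof -
    define f where "f x = \<pi>' x / \<pi> x" for x
    have harm: "(\<Sum>x\<in>S. P y x * f x) = f y" if y: "y \<in> S" for y
    proof -
      have "\<pi> y * (\<Sum>x\<in>S. P y x * f x) = (\<Sum>x\<in>S. \<pi> y * P y x * f x)"
        by (simp add: sum_distrib_left mult.assoc)
      also have "\<dots> = (\<Sum>x\<in>S. \<pi>' x * P x y)"
      proof (rule sum.cong)
        fix x assume x: "x \<in> S"
        have "\<pi> y * P y x = \<pi> x * P x y" using rev x y unfolding reversible_on_def by metis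
        thus "\<pi> y * P y x * f x = \<pi>' x * P x y" using pos[OF x] unfolding f_def by (simp add: field_simps)
      qed simp
      also have "\<dots> = \<pi>' y" using st y unfolding stationary_on_def by auto
      finally show ?thesis using pos[OF y] unfolding f_def by (simp add: field_simps)
    qed
    have Sne: "S \<noteq> {}" using pd unfolding prob_dist_on_def by auto
    have "Max (f ` S) \<in> f ` S" by (rule Max_in) (use fin Sne in auto)
    then obtain y0 where y0: "y0 \<in> S" "f y0 = Max (f ` S)" by (metis imageE)
    have mx: "f z \<le> f y0" if "z \<in> S" for z using y0(2) fin that by simp
    have const: "f z = f y0" if "z \<in> S" for z
      by (rule harmonic_const[OF fin nn rows harm irr y0(1) mx that]) auto
    have eq: "\<pi>' z = f y0 * \<pi> z" if "z \<in> S" for z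
      using const[OF that] pos[OF that] unfolding f_def by (simp add: field_simps)
    have "1 = (\<Sum>z\<in>S. \<pi>' z)" using st unfolding stationary_on_def prob_dist_on_def by simp
    also have "\<dots> = f y0 * (\<Sum>z\<in>S. \<pi> z)" using eq by (simp add: sum_distrib_left)
    also have "\<dots> = f y0" using pd unfolding prob_dist_on_def by simp
    finally show ?thesis using eq by simp
  qed
  thus ?thesis unfolding unique_stationary_on_def using stat by blast
qed




locale gl =
  fixes V :: "'v set" and S :: "('v \<Rightarrow> 'b) set" and \<pi> :: "('v \<Rightarrow> 'b) \<Rightarrow> real"
  assumes finV: "finite V" and Vne: "V \<noteq> {}" and finS: "finite S"
    and pos: "\<And>y. y \<in> S \<Longrightarrow> \<pi> y > 0"
begin

definition "Z v y = (\<Sum>z\<in>{z \<in> S. \<forall>u. u \<noteq> v \<longrightarrow> z u = y u}. \<pi> z)"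

lemma Z_nonneg: "Z v y \<ge> 0"
  unfolding Z_def by (rule sum_nonneg) (use pos in \<open>auto intro: less_imp_le\<close>)

lemma Z_pos: "y \<in> S \<Longrightarrow> Z v y > 0"
  unfolding Z_def by (rule sum_pos2[where i=y]) (use finS pos in \<open>auto intro: less_imp_le\<close>)

lemma gl_eq: "glauber V S \<pi> y y' = (1 / real (card V)) *
     (\<Sum>v\<in>V. if y' \<in> S \<and> (\<forall>u. u \<noteq> v \<longrightarrow> y' u = y u) then \<pi> y' / Z v y else 0)"
  unfolding glauber_def Z_def ..

lemma nonneg: "glauber V S \<pi> y y' \<ge> 0"
  unfolding gl_eq
  by (intro mult_nonneg_nonneg sum_nonneg) (simp_all add: Z_nonneg less_imp_le[OF pos])

lemma rows: assumes y: "y \<in> S" shows "(\<Sum>y'\<in>S. glauber V S \<pi> y y') = 1"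
proof -
  have inner: "(\<Sum>y'\<in>S. if y' \<in> S \<and> (\<forall>u. u \<noteq> v \<longrightarrow> y' u = y u) then \<pi> y' / Z v y else 0) = 1" for v
  proof -
    have "(\<Sum>y'\<in>S. if y' \<in> S \<and> (\<forall>u. u \<noteq> v \<longrightarrow> y' u = y u) then \<pi> y' / Z v y else 0)
        = (\<Sum>y'\<in>S. if (\<forall>u. u \<noteq> v \<longrightarrow> y' u = y u) then \<pi> y' / Z v y else 0)"
      by (rule sum.cong) auto
    also have "\<dots> = (\<Sum>y'\<in>{z \<in> S. \<forall>u. u \<noteq> v \<longrightarrow> z u = y u}. \<pi> y' / Z v y)"
      by (rule sum.inter_filter[symmetric]) (rule finS)
    also have "\<dots> = (\<Sum>y'\<in>{z \<in> S. \<forall>u. u \<noteq> v \<longrightarrow> z u = y u}. \<pi> y') / Z v y"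
      by (rule sum_divide_distrib[symmetric])
    also have "\<dots> = Z v y / Z v y" unfolding Z_def ..
    also have "\<dots> = 1" using Z_pos[OF y, of v] by simp
    finally show ?thesis .
  qed
  define f where "f v y' = (if y' \<in> S \<and> (\<forall>u. u \<noteq> v \<longrightarrow> y' u = y u) then \<pi> y' / Z v y else 0)" for v y'
  have g: "glauber V S \<pi> y y' = (1 / real (card V)) * (\<Sum>v\<in>V. f v y')" for y'
    unfolding gl_eq f_def ..
  have "(\<Sum>y'\<in>S. glauber V S \<pi> y y') = (\<Sum>y'\<in>S. (1 / real (card V)) * (\<Sum>v\<in>V. f v y'))"
    unfolding g ..
  also have "\<dots> = (1 / real (card V)) * (\<Sum>y'\<in>S. \<Sum>v\<in>V. f v y')"
    by (rule sum_distrib_left[symmetric])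
  also have "\<dots> = (1 / real (card V)) * (\<Sum>v\<in>V. \<Sum>y'\<in>S. f v y')"
    by (subst sum.swap) (rule refl)
  also have "\<dots> = (1 / real (card V)) * (\<Sum>v\<in>V. 1)"
  proof -
    have inner': "(\<Sum>y'\<in>S. f v y') = 1" for v unfolding f_def by (rule inner)
    show ?thesis by (simp only: inner')
  qed
  also have "\<dots> = 1" using inner finV Vne by simp
  finally show ?thesis .
qed

lemma rev: assumes x: "x \<in> S" and y: "y \<in> S"
  shows "\<pi> x * glauber V S \<pi> x y = \<pi> y * glauber V S \<pi> y x"
proof -
  have tm: "\<pi> x * (if y \<in> S \<and> (\<forall>u. u \<noteq> v \<longrightarrow> y u = x u) then \<pi> y / Z v x else 0)
      = \<pi> y * (if x \<in> S \<and> (\<forall>u. u \<noteq> v \<longrightarrow> x u = y u) then \<pi> x / Z v y else 0)" for v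
  proof (cases "\<forall>u. u \<noteq> v \<longrightarrow> y u = x u")
    case True
    hence "{z \<in> S. \<forall>u. u \<noteq> v \<longrightarrow> z u = x u} = {z \<in> S. \<forall>u. u \<noteq> v \<longrightarrow> z u = y u}" by auto
    hence "Z v x = Z v y" unfolding Z_def by simp
    moreover have "\<forall>u. u \<noteq> v \<longrightarrow> x u = y u" using True by auto
    ultimately show ?thesis using True x y by simp
  next
    case False
    have n2: "\<not> (\<forall>u. u \<noteq> v \<longrightarrow> x u = y u)" using False by auto
    have e1: "(if y \<in> S \<and> (\<forall>u. u \<noteq> v \<longrightarrow> y u = x u) then \<pi> y / Z v x else 0) = 0" using False by auto
    have e2: "(if x \<in> S \<and> (\<forall>u. u \<noteq> v \<longrightarrow> x u = y u) then \<pi> x / Z v y else 0) = 0" using n2 by auto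
    show ?thesis unfolding e1 e2 by simp
  qed
  show ?thesis unfolding gl_eq
    by (simp only: mult.left_commute[of "\<pi> x"] mult.left_commute[of "\<pi> y"] sum_distrib_left tm)
qed

lemma step_pos: assumes y: "y \<in> S" and y': "y' \<in> S" and v: "v \<in> V"
  and agree: "\<forall>u. u \<noteq> v \<longrightarrow> y' u = y u"
  shows "glauber V S \<pi> y y' > 0"
proof -
  have "0 < (\<Sum>w\<in>V. if y' \<in> S \<and> (\<forall>u. u \<noteq> w \<longrightarrow> y' u = y u) then \<pi> y' / Z w y else 0)"
    by (rule sum_pos2[where i=v]) (use finV v y y' agree pos Z_pos Z_nonneg in \<open>auto intro!: divide_nonneg_nonneg less_imp_le\<close>)
  thus ?thesis unfolding gl_eq using finV Vne by (simp add: card_gt_0_iff)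
qed

lemma irred_prod:
  assumes SY: "S = PiE V Y"
  shows "irreducible_on S (glauber V S \<pi>)"
proof -
  have "\<And>y. y \<in> S \<Longrightarrow> y' \<in> S \<Longrightarrow> card {v\<in>V. y v \<noteq> y' v} = n \<Longrightarrow> \<exists>k. mpow S (glauber V S \<pi>) k y y' > 0" for n y'
  proof (induction n)
    case 0
    have "{v\<in>V. y v \<noteq> y' v} = {}" using 0 finV by simp
    hence "y = y'" using 0 SY by (intro PiE_ext[of y V Y y']) auto
    hence "mpow S (glauber V S \<pi>) 0 y y' > 0" by simp
    thus ?case by blast
  next
    case (Suc n)
    have "{v\<in>V. y v \<noteq> y' v} \<noteq> {}"
    proof
      assume "{v\<in>V. y v \<noteq> y' v} = {}"
      hence "card {v\<in>V. y v \<noteq> y' v} = 0" by (simp only: card.empty)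
      thus False using Suc.prems(3) by simp
    qed
    then obtain v where v: "v \<in> V" "y v \<noteq> y' v" by auto
    define z where "z = y(v := y' v)"
    have zS: "z \<in> S" unfolding z_def SY
      using Suc.prems(1,2) v(1) unfolding SY by (auto simp: PiE_iff extensional_def)
    have "{u\<in>V. z u \<noteq> y' u} = {u\<in>V. y u \<noteq> y' u} - {v}" unfolding z_def by auto
    hence "card {u\<in>V. z u \<noteq> y' u} = n" using Suc.prems(3) v finV by (simp add: card_Diff_singleton)
    then obtain k where k: "mpow S (glauber V S \<pi>) k z y' > 0" using Suc.IH zS Suc.prems(2) by blast
    have p: "glauber V S \<pi> y z > 0"
      by (rule step_pos[OF Suc.prems(1) zS v(1)]) (simp add: z_def)
    have "0 < glauber V S \<pi> y z * mpow S (glauber V S \<pi>) k z y'" using p k by simp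
    also have "\<dots> \<le> mpow S (glauber V S \<pi>) (Suc k) y y'"
      by (rule mpow_step[OF _ finS zS]) (rule nonneg)
    finally show ?case by blast
  qed
  thus ?thesis unfolding irreducible_on_def by blast
qed

lemma aperiodic: "aperiodic_on S (glauber V S \<pi>)"
  unfolding aperiodic_on_def
proof
  fix x assume x: "x \<in> S"
  obtain v where v: "v \<in> V" using Vne by auto
  have "glauber V S \<pi> x x > 0" by (rule step_pos[OF x x v]) simp
  hence "mpow S (glauber V S \<pi>) 1 x x > 0" using finS x by (simp add: sum.If_cases if_distrib)
  hence "1 \<in> {n. n > 0 \<and> mpow S (glauber V S \<pi>) n x x > 0}" by simp
  hence "Gcd {n. n > 0 \<and> mpow S (glauber V S \<pi>) n x x > 0} dvd 1" by (rule Gcd_dvd)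
  thus "Gcd {n. n > 0 \<and> mpow S (glauber V S \<pi>) n x x > 0} = (1::nat)" by simp
qed

end



lemma ineq:
  fixes D :: nat assumes D: "D \<ge> 1"
  shows "1 / (2 * exp 1 * real D) \<le> 1 / (real D + 1) * (1 - 1 / (real D + 1)) ^ D"
proof -
  have Dp: "real D > 0" using D by simp
  have "1 + 1 / real D \<le> exp (1 / real D)" by (rule exp_ge_add_one_self)
  hence "(1 + 1 / real D) ^ D \<le> exp (1 / real D) ^ D"
    by (rule power_mono) (use Dp in simp)
  also have "\<dots> = exp (real D * (1 / real D))" by (rule exp_of_nat_mult[symmetric])
  also have "\<dots> = exp 1" using Dp by simp
  finally have pe: "(1 + 1 / real D) ^ D \<le> exp 1" .
  have pp: "(1 + 1 / real D) ^ D > 0" using Dp by (simp add: add_pos_nonneg)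
  have eq: "1 - 1 / (real D + 1) = 1 / (1 + 1 / real D)" using Dp by (simp add: field_simps)
  have "(1 - 1 / (real D + 1)) ^ D = 1 / (1 + 1 / real D) ^ D" unfolding eq by (simp add: power_one_over)
  also have "\<dots> \<ge> 1 / exp 1" using pe pp by (simp add: frac_le)
  finally have a: "(1 - 1 / (real D + 1)) ^ D \<ge> 1 / exp 1" .
  have "1 / (2 * exp 1 * real D) \<le> 1 / ((real D + 1) * exp 1)"
  proof (rule divide_left_mono)
    have "real D + 1 \<le> 2 * real D" using D by simp
    hence "(real D + 1) * exp 1 \<le> (2 * real D) * exp 1" by (rule mult_right_mono) simp
    thus "(real D + 1) * exp 1 \<le> 2 * exp 1 * real D" by (simp add: mult_ac)
    show "0 < 2 * exp 1 * real D * ((real D + 1) * exp 1)" using Dp by simp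
  qed simp
  also have "\<dots> = 1 / (real D + 1) * (1 / exp 1)" by simp
  also have "\<dots> \<le> 1 / (real D + 1) * (1 - 1 / (real D + 1)) ^ D"
    using a by (intro mult_left_mono) auto
  finally show ?thesis .
qed

lemma lll_apply:
  assumes csp: "csp_formula V Q C vbl" and at: "atomic_constraints Q C vbl sat"
    and ps: "projection_scheme V Q h Sig" and ec: "entropy_criterion V Q C vbl h Sig \<alpha> \<beta>"
    and b0: "0 < \<beta>"
    and hyp: "log 2 (1 / max_viol_prob Q C vbl) \<ge> (1 / \<beta>) * log 2 (2 * exp 1 * real (max_dep_degree C vbl))"
    and y: "y \<in> PiE V (\<lambda>v. h v ` Q v)"
  shows "\<exists>x\<in>sat_assignments V Q C vbl sat. proj V h x = y"
proof -
  have finV: "finite V" and finC: "finite C" and Qf: "\<forall>v\<in>V. finite (Q v) \<and> card (Q v) \<ge> 2"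
    and vblV: "\<forall>c\<in>C. vbl c \<subseteq> V \<and> vbl c \<noteq> {}"
    using csp unfolding csp_formula_def by auto
  have "\<forall>c\<in>C. \<exists>s. {s\<in>PiE (vbl c) Q. \<not> sat c s} = {s}"
    using at unfolding atomic_constraints_def by (auto simp: card_1_singleton_iff)
  then obtain \<sigma> where \<sigma>: "\<forall>c\<in>C. {s\<in>PiE (vbl c) Q. \<not> sat c s} = {\<sigma> c}" by metis
  define G where "G v = {a\<in>Q v. h v a = y v}" for v
  define D where "D = max_dep_degree C vbl"
  have Gne: "\<forall>v\<in>V. finite (G v) \<and> G v \<noteq> {}"
  proof
    fix v assume v: "v \<in> V"
    have "y v \<in> h v ` Q v" using PiE_mem[OF y v] .
    thus "finite (G v) \<and> G v \<noteq> {}" using Qf v unfolding G_def by auto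
  qed
  have deg: "\<forall>c\<in>C. card {c'\<in>C. c' \<noteq> c \<and> vbl c \<inter> vbl c' \<noteq> {}} \<le> D"
  proof
    fix c assume c: "c \<in> C"
    have "dep_degree C vbl c \<le> Max (insert 0 (dep_degree C vbl ` C))"
      by (rule Max_ge) (use finC c in auto)
    thus "card {c'\<in>C. c' \<noteq> c \<and> vbl c \<inter> vbl c' \<noteq> {}} \<le> D"
      unfolding D_def max_dep_degree_def dep_degree_def .
  qed
  have prodG: "(\<Prod>v\<in>vbl c. real (card (Q v))) powr \<beta> \<le> (\<Prod>v\<in>vbl c. real (card (G v)))" if c: "c \<in> C" for c
  proof -
    have "(\<Prod>v\<in>vbl c. real (card (Q v))) powr \<beta>
        \<le> (\<Prod>v\<in>vbl c. real_of_int \<lfloor>real (card (Q v)) / real (card (Sig v))\<rfloor>)"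
      using ec c unfolding entropy_criterion_def by auto
    also have "\<dots> \<le> (\<Prod>v\<in>vbl c. real (card (G v)))"
    proof (rule prod_mono)
      fix v assume vc: "v \<in> vbl c"
      hence v: "v \<in> V" using vblV c by auto
      obtain a where a: "a \<in> Q v" "y v = h v a" using PiE_mem[OF y v] by auto
      have "h v \<in> Q v \<rightarrow> Sig v" using ps v unfolding projection_scheme_def by auto
      hence ys: "y v \<in> Sig v" using a by auto
      have "real_of_int \<lfloor>real (card (Q v)) / real (card (Sig v))\<rfloor> \<le> real (card (G v))"
        using ec v ys unfolding entropy_criterion_def G_def by auto
      moreover have "0 \<le> real_of_int \<lfloor>real (card (Q v)) / real (card (Sig v))\<rfloor>" by simp
      ultimately show "0 \<le> real_of_int \<lfloor>real (card (Q v)) / real (card (Sig v))\<rfloor> \<and>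
          real_of_int \<lfloor>real (card (Q v)) / real (card (Sig v))\<rfloor> \<le> real (card (G v))" by simp
    qed
    finally show ?thesis .
  qed
  have qbig: "2 \<le> (\<Prod>v\<in>vbl c. real (card (Q v)))" if c: "c \<in> C" for c
  proof -
    obtain v0 where v0: "v0 \<in> vbl c" using vblV c by auto
    have fin: "finite (vbl c)" using vblV c finV finite_subset by blast
    have q0: "2 \<le> real (card (Q v0))" using Qf vblV c v0 by auto
    have r1: "1 \<le> (\<Prod>v\<in>vbl c - {v0}. real (card (Q v)))"
      by (rule prod_ge_1) (use Qf vblV c in force)
    have "(\<Prod>v\<in>vbl c. real (card (Q v))) = real (card (Q v0)) * (\<Prod>v\<in>vbl c - {v0}. real (card (Q v)))"
      by (rule prod.remove[OF fin v0])
    also have "\<dots> \<ge> 2 * 1" using q0 r1 by (intro mult_mono) auto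
    finally show ?thesis by simp
  qed
  have "\<exists>x r. 0 < x \<and> x < 1 \<and> r \<le> x * (1 - x) ^ D \<and> (\<forall>c\<in>C. 1 \<le> r * (\<Prod>v\<in>vbl c. real (card (G v))))"
  proof (cases "D = 0")
    case True
    have "\<forall>c\<in>C. 1 \<le> 1/2 * (\<Prod>v\<in>vbl c. real (card (G v)))"
    proof
      fix c assume c: "c \<in> C"
      have "1 < (\<Prod>v\<in>vbl c. real (card (Q v))) powr \<beta>"
        using qbig[OF c] b0 by (intro gr_one_powr) auto
      hence "1 < (\<Prod>v\<in>vbl c. real (card (G v)))" using prodG[OF c] by linarith
      hence "1 < real (\<Prod>v\<in>vbl c. card (G v))" by simp
      hence "2 \<le> (\<Prod>v\<in>vbl c. card (G v))" by linarith
      hence "2 \<le> real (\<Prod>v\<in>vbl c. card (G v))" by linarith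
      thus "1 \<le> 1/2 * (\<Prod>v\<in>vbl c. real (card (G v)))" by simp
    qed
    thus ?thesis using True by (intro exI[of _ "1/2"]) auto
  next
    case False
    hence D1: "D \<ge> 1" by simp
    define P0 where "P0 = max_viol_prob Q C vbl"
    define L where "L = log 2 (2 * exp 1 * real D)"
    have big: "2 * exp 1 * real D \<le> (\<Prod>v\<in>vbl c. real (card (Q v))) powr \<beta>" if c: "c \<in> C" for c
    proof -
      define q where "q = (\<Prod>v\<in>vbl c. real (card (Q v)))"
      have q2: "q \<ge> 2" using qbig[OF c] q_def by simp
      have pc: "(\<Prod>v\<in>vbl c. 1 / real (card (Q v))) = 1 / q" unfolding q_def by (simp add: prod_dividef)
      have "1 / q \<le> P0" unfolding P0_def max_viol_prob_def pc[symmetric]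
        by (rule Max_ge) (use finC c in auto)
      moreover have "0 < 1 / q" using q2 by simp
      ultimately have P0p: "P0 > 0" by linarith
      have "1 / P0 \<le> 1 / (1 / q)"
        by (rule divide_left_mono[OF \<open>1 / q \<le> P0\<close>]) (use P0p q2 in simp_all)
      hence iq: "1 / P0 \<le> q" by simp
      have e2: "2 \<le> exp (1::real)" using exp_ge_add_one_self[of "1::real"] by simp
      have "2 * exp 1 * 1 \<le> 2 * exp 1 * real D" using D1 by (intro mult_left_mono) auto
      hence "2 * exp 1 * real D > 1" using e2 by linarith
      have "L = \<beta> * ((1 / \<beta>) * L)" using b0 by simp
      also have "\<dots> \<le> \<beta> * log 2 (1 / P0)" using hyp b0 unfolding L_def P0_def D_def
        by (intro mult_left_mono) auto
      also have "\<dots> \<le> \<beta> * log 2 q" using iq P0p b0 q2 by (intro mult_left_mono) auto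
      also have "\<dots> = log 2 (q powr \<beta>)" by (simp add: log_powr)
      finally have "log 2 (2 * exp 1 * real D) \<le> log 2 (q powr \<beta>)" unfolding L_def .
      moreover have "2 * exp 1 * real D > 0" using D1 by simp
      moreover have "q powr \<beta> > 0" using q2 by simp
      ultimately show ?thesis unfolding q_def by simp
    qed
    have "\<forall>c\<in>C. 1 \<le> 1 / (2 * exp 1 * real D) * (\<Prod>v\<in>vbl c. real (card (G v)))"
    proof
      fix c assume c: "c \<in> C"
      have "2 * exp 1 * real D \<le> (\<Prod>v\<in>vbl c. real (card (G v)))" using big[OF c] prodG[OF c] by linarith
      moreover have "2 * exp 1 * real D > 0" using D1 by simp
      ultimately show "1 \<le> 1 / (2 * exp 1 * real D) * (\<Prod>v\<in>vbl c. real (card (G v)))"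
        by (simp add: field_simps)
    qed
    moreover have "0 < 1 / (real D + 1)" "1 / (real D + 1) < 1" using D1 by auto
    ultimately show ?thesis using ineq[OF D1] by blast
  qed
  then obtain x r where xr: "0 < x" "x < 1" "r \<le> x * (1 - x) ^ D"
    "\<forall>c\<in>C. 1 \<le> r * (\<Prod>v\<in>vbl c. real (card (G v)))" by blast
  interpret lll V G C vbl \<sigma> x r D
    by unfold_locales (use finV Gne finC vblV xr deg in auto)
  obtain z where z: "z \<in> PiE V G" "\<forall>c\<in>C. restrict z (vbl c) \<noteq> \<sigma> c" using exists_good by blast
  have zQ: "z \<in> PiE V Q" using z(1) PiE_mono[of V G Q] unfolding G_def by blast
  have "z \<in> sat_assignments V Q C vbl sat"
    unfolding sat_assignments_def
  proof (intro CollectI conjI zQ ballI)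
    fix c assume c: "c \<in> C"
    have "restrict z (vbl c) \<in> PiE (vbl c) Q"
      using zQ vblV c by (auto simp: restrict_PiE_iff PiE_iff)
    thus "sat c (restrict z (vbl c))" using \<sigma> c z(2) by blast
  qed
  moreover have "proj V h z = y"
  proof
    fix v show "proj V h z v = y v"
    proof (cases "v \<in> V")
      case True thus ?thesis using PiE_mem[OF z(1) True] unfolding proj_def G_def by simp
    next
      case False thus ?thesis using PiE_arb[OF y False] unfolding proj_def by simp
    qed
  qed
  ultimately show ?thesis by blast
qed




theorem proposition8p1:
  fixes V :: "'v set" and Q :: "'v \<Rightarrow> 'a set" and C :: "'c set"
    and vbl :: "'c \<Rightarrow> 'v set" and sat :: "'c \<Rightarrow> ('v \<Rightarrow> 'a) \<Rightarrow> bool"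
    and h :: "'v \<Rightarrow> 'a \<Rightarrow> 'b" and Sig :: "'v \<Rightarrow> 'b set"
    and \<alpha> \<beta> :: real
  assumes "csp_formula V Q C vbl"
    and "atomic_constraints Q C vbl sat"
    and "projection_scheme V Q h Sig"
    and "entropy_criterion V Q C vbl h Sig \<alpha> \<beta>"
    and "0 < \<beta>" and "\<beta> < \<alpha>" and "\<alpha> < 1"
    and "log 2 (1 / max_viol_prob Q C vbl)
           \<ge> (1 / \<beta>) * log 2 (2 * exp 1 * real (max_dep_degree C vbl))"
  shows "let S = proj_support V Q C vbl sat h;
             \<nu> = proj_dist V Q C vbl sat h;
             P = glauber V S \<nu>
         in stochastic_on S P \<and> irreducible_on S P \<and> aperiodic_on S P \<and>
            reversible_on S P \<nu> \<and> unique_stationary_on S P \<nu>"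
proof -
  have finV: "finite V" and Vne: "V \<noteq> {}" and Qf: "\<forall>v\<in>V. finite (Q v) \<and> card (Q v) \<ge> 2"
    using assms(1) unfolding csp_formula_def by auto
  define Y where "Y = PiE V (\<lambda>v. h v ` Q v)"
  define Sat where "Sat = sat_assignments V Q C vbl sat"
  define \<nu> where "\<nu> = proj_dist V Q C vbl sat h"
  have lll: "\<exists>x\<in>Sat. proj V h x = y" if "y \<in> Y" for y
    unfolding Sat_def by (rule lll_apply[OF assms(1-4) assms(5) assms(8)]) (use that Y_def in simp)
  have SatQ: "Sat \<subseteq> PiE V Q" unfolding Sat_def sat_assignments_def by auto
  have finSat: "finite Sat" using SatQ finite_PiE[of V Q] finV Qf finite_subset by blast
  have projY: "proj V h x \<in> Y" if "x \<in> PiE V Q" for x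
    unfolding Y_def
  proof (rule PiE_I)
    fix v assume "v \<in> V" thus "proj V h x v \<in> h v ` Q v" using PiE_mem[OF that] unfolding proj_def by auto
  next
    fix v assume "v \<notin> V" thus "proj V h x v = undefined" unfolding proj_def by simp
  qed
  have S_eq: "proj_support V Q C vbl sat h = Y"
  proof
    show "proj_support V Q C vbl sat h \<subseteq> Y"
      unfolding proj_support_def Sat_def[symmetric] using projY SatQ by auto
    show "Y \<subseteq> proj_support V Q C vbl sat h"
      unfolding proj_support_def Sat_def[symmetric] using lll by blast
  qed
  have finY: "finite Y" unfolding Y_def using finV Qf by (intro finite_PiE) auto
  have Yne: "Y \<noteq> {}" unfolding Y_def using Qf by (auto simp: PiE_eq_empty_iff)
  have imgY: "proj V h ` Sat \<subseteq> Y" using projY SatQ by auto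
  have Sat_ne: "Sat \<noteq> {}" using Yne lll by blast
  have cSat: "card Sat > 0" using Sat_ne finSat by (simp add: card_gt_0_iff)
  have pos: "\<nu> y > 0" if y: "y \<in> Y" for y
  proof -
    obtain x where x: "x \<in> Sat" "proj V h x = y" using lll[OF y] by blast
    have "{x \<in> Sat. proj V h x = y} \<noteq> {}" using x by auto
    moreover have "finite {x \<in> Sat. proj V h x = y}" using finSat by simp
    ultimately have "card {x \<in> Sat. proj V h x = y} > 0" by (simp add: card_gt_0_iff)
    thus ?thesis unfolding \<nu>_def proj_dist_def Sat_def[symmetric] using cSat by simp
  qed
  have pd: "prob_dist_on Y \<nu>"
    unfolding prob_dist_on_def
  proof
    show "\<forall>x\<in>Y. 0 \<le> \<nu> x" using pos by (auto intro: less_imp_le)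
    have g: "(\<Sum>y\<in>Y. \<Sum>x\<in>{x. x \<in> Sat \<and> proj V h x = y}. (1::real)) = (\<Sum>x\<in>Sat. 1)"
      by (rule sum.group[OF finSat finY imgY])
    hence g': "(\<Sum>y\<in>Y. real (card {x \<in> Sat. proj V h x = y})) = real (card Sat)" by simp
    have "(\<Sum>x\<in>Y. \<nu> x) = (\<Sum>y\<in>Y. real (card {x \<in> Sat. proj V h x = y})) / real (card Sat)"
      unfolding \<nu>_def proj_dist_def Sat_def[symmetric] by (simp add: sum_divide_distrib)
    also have "\<dots> = 1" using g' cSat by simp
    finally show "(\<Sum>x\<in>Y. \<nu> x) = 1" .
  qed
  interpret G: gl V Y \<nu> by unfold_locales (use finV Vne finY pos in auto)
  have st: "stochastic_on Y (glauber V Y \<nu>)"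
    unfolding stochastic_on_def prob_dist_on_def using finY G.nonneg G.rows by auto
  have irr: "irreducible_on Y (glauber V Y \<nu>)" by (rule G.irred_prod[OF Y_def])
  have ap: "aperiodic_on Y (glauber V Y \<nu>)" by (rule G.aperiodic)
  have rv: "reversible_on Y (glauber V Y \<nu>) \<nu>" unfolding reversible_on_def using G.rev by auto
  have un: "unique_stationary_on Y (glauber V Y \<nu>) \<nu>"
    by (rule markov_unique[OF finY _ _ pos pd rv irr]) (use G.nonneg G.rows in auto)
  show ?thesis unfolding Let_def S_eq \<nu>_def[symmetric] using st irr ap rv un by simp
qed


end
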